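(* Let $c_1,\dots,c_r\in K^\times$. For $1\le s\le r$ let $f_s=(\tau+c_s)(\tau+c_{s-1})\cdots(\tau+c_1)\in K\{\tau\}$ and $W_s=\{\lambda\in K^{\rm sep}: f_s(\lambda)=0\}$. Then $0=W_0\subset W_1\subset\cdots\subset W_r$ are $G_K$-stable $\mathbb{F}_q$-subspaces with $\dim W_s=s$, and the representation $\bar\rho:G_K\to\mathrm{GL}_{\mathbb{F}_q}(W_r)\cong\mathrm{GL}_r(\mathbb{F}_q)$ is isomorphic to an upper triangular representation with diagonal characters $\kappa_{(-c_1)},\kappa_{(-c_2)},\dots,\kappa_{(-c_r)}$.
   Context: $p$ prime, $q$ a power of $p$, $F=\mathbb{F}_q(t)$, $K$ a finite extension of $F$. $K\{\tau\}$ is the twisted polynomial ring with $\tau c=c^q\tau$, acting on $K^{\rm sep}$ with $\tau$ the $q$-th power map. For $c\in K^\times$, $\kappa_{(c)}:G_K\to\mathbb{F}_q^\times$ is the Kummer character $\sigma\mapsto\sigma(\lambda)/\lambda$ for any $\lambda\in K^{\rm sep}$ with $\lambda^{q-1}=c$ (i.e. the character corresponding to the class of $c$ under $K^\times/(K^\times)^{q-1}\cong\mathrm{Hom}(G_K,\mathbb{F}_q^\times)$). *)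

theory Defs
  imports "HOL-Computational_Algebra.Polynomial"
begin

text \<open>Ambient algebraically closed field (type 'a); all fields below are subfields of it.\<close>

definition alg_closed :: "'a::field itself \<Rightarrow> bool" where
  "alg_closed _ \<longleftrightarrow> (\<forall>f::'a poly. degree f > 0 \<longrightarrow> (\<exists>x. poly f x = 0))"

definition is_subfield :: "'a::field set \<Rightarrow> bool" where
  "is_subfield S \<longleftrightarrow> 0 \<in> S \<and> 1 \<in> S \<and>
     (\<forall>x\<in>S. \<forall>y\<in>S. x + y \<in> S \<and> x * y \<in> S) \<and> (\<forall>x\<in>S. - x \<in> S) \<and>
     (\<forall>x\<in>S. x \<noteq> 0 \<longrightarrow> inverse x \<in> S)"

definition poly_over :: "'a::field set \<Rightarrow> 'a poly \<Rightarrow> bool" where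
  "poly_over S f \<longleftrightarrow> (\<forall>i. coeff f i \<in> S)"

definition transcendental_over :: "'a::field set \<Rightarrow> 'a \<Rightarrow> bool" where
  "transcendental_over S t \<longleftrightarrow> (\<forall>f. poly_over S f \<and> poly f t = 0 \<longrightarrow> f = 0)"

definition rat_fun_field :: "'a::field set \<Rightarrow> 'a \<Rightarrow> 'a set" where
  "rat_fun_field S t = {poly a t / poly b t | a b. poly_over S a \<and> poly_over S b \<and> poly b t \<noteq> 0}"

definition lin_comb :: "'a::field set \<Rightarrow> 'a set \<Rightarrow> 'a set" where
  "lin_comb F B = {\<Sum>b\<in>B. a b * b | a. \<forall>b\<in>B. a b \<in> F}"

definition lin_indep :: "'a::field set \<Rightarrow> 'a set \<Rightarrow> bool" where
  "lin_indep F B \<longleftrightarrow> (\<forall>a. (\<forall>b\<in>B. a b \<in> F) \<and> (\<Sum>b\<in>B. a b * b) = 0 \<longrightarrow> (\<forall>b\<in>B. a b = 0))"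

definition is_basis :: "'a::field set \<Rightarrow> 'a set \<Rightarrow> 'a set \<Rightarrow> bool" where
  "is_basis F W B \<longleftrightarrow> finite B \<and> B \<subseteq> W \<and> lin_indep F B \<and> W = lin_comb F B"

definition is_subspace :: "'a::field set \<Rightarrow> 'a set \<Rightarrow> bool" where
  "is_subspace F W \<longleftrightarrow> 0 \<in> W \<and> (\<forall>x\<in>W. \<forall>y\<in>W. x + y \<in> W) \<and> (\<forall>a\<in>F. \<forall>x\<in>W. a * x \<in> W)"

definition has_dim :: "'a::field set \<Rightarrow> 'a set \<Rightarrow> nat \<Rightarrow> bool" where
  "has_dim F W n \<longleftrightarrow> (\<exists>B. is_basis F W B \<and> card B = n)"

definition finite_ext :: "'a::field set \<Rightarrow> 'a set \<Rightarrow> bool" where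
  "finite_ext F K \<longleftrightarrow> (\<exists>B. is_basis F K B)"

definition sep_closure :: "'a::field set \<Rightarrow> 'a set" where
  "sep_closure K = {x. \<exists>f. f \<noteq> 0 \<and> poly_over K f \<and> poly f x = 0 \<and>
                        (\<forall>y. poly f y = 0 \<longrightarrow> poly (pderiv f) y \<noteq> 0)}"

text \<open>Absolute Galois group G_K = Aut(K^sep / K); automorphisms are normalised
  to be the identity outside K^sep.\<close>
definition abs_galois :: "'a::field set \<Rightarrow> ('a \<Rightarrow> 'a) set" where
  "abs_galois K = {\<sigma>. bij_betw \<sigma> (sep_closure K) (sep_closure K) \<and>
      (\<forall>x\<in>sep_closure K. \<forall>y\<in>sep_closure K. \<sigma> (x + y) = \<sigma> x + \<sigma> y \<and> \<sigma> (x * y) = \<sigma> x * \<sigma> y) \<and>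
      (\<forall>x\<in>K. \<sigma> x = x) \<and> (\<forall>x. x \<notin> sep_closure K \<longrightarrow> \<sigma> x = x)}"

definition kummer :: "nat \<Rightarrow> 'a::field set \<Rightarrow> 'a \<Rightarrow> ('a \<Rightarrow> 'a) \<Rightarrow> 'a" where
  "kummer q K c \<sigma> = (let l = (SOME l. l \<in> sep_closure K \<and> l ^ (q - 1) = c) in \<sigma> l / l)"

text \<open>Twisted polynomials K{tau}: coefficient lists [a0, a1, ...] for sum a_i tau^i,
  with tau * b = b^q * tau.\<close>
definition tcoeff :: "'a::field list \<Rightarrow> nat \<Rightarrow> 'a" where
  "tcoeff a i = (if i < length a then a ! i else 0)"

definition tmul :: "nat \<Rightarrow> 'a::field list \<Rightarrow> 'a list \<Rightarrow> 'a list" where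
  "tmul q a b = map (\<lambda>k. \<Sum>i\<le>k. tcoeff a i * (tcoeff b (k - i)) ^ (q ^ i))
                    [0..<length a + length b - 1]"

definition teval :: "nat \<Rightarrow> 'a::field list \<Rightarrow> 'a \<Rightarrow> 'a" where
  "teval q a x = (\<Sum>i<length a. a ! i * x ^ (q ^ i))"

fun fpoly :: "nat \<Rightarrow> (nat \<Rightarrow> 'a::field) \<Rightarrow> nat \<Rightarrow> 'a list" where
  "fpoly q c 0 = [1]"
| "fpoly q c (Suc s) = tmul q [c (Suc s), 1] (fpoly q c s)"

definition Wsp :: "nat \<Rightarrow> 'a::field set \<Rightarrow> (nat \<Rightarrow> 'a) \<Rightarrow> nat \<Rightarrow> 'a set" where
  "Wsp q K c s = {l \<in> sep_closure K. teval q (fpoly q c s) l = 0}"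

end

theory Submission
  imports Defs "HOL-Computational_Algebra.Primes"
begin

lemma frob_p:
  fixes x y :: "'a::comm_ring_1"
  assumes "prime p" "of_nat p = (0::'a)"
  shows "(x + y) ^ p = x ^ p + y ^ p"
proof -
  have p0: "p > 0" using assms prime_gt_0_nat by blast
  have "(x + y) ^ p = (\<Sum>k\<le>p. of_nat (p choose k) * x ^ k * y ^ (p - k))"
    by (rule binomial_ring)
  also have "\<dots> = (\<Sum>k\<in>{0,p}. of_nat (p choose k) * x ^ k * y ^ (p - k))"
  proof (rule sum.mono_neutral_right)
    show "\<forall>i\<in>{..p} - {0, p}. of_nat (p choose i) * x ^ i * y ^ (p - i) = 0"
    proof
      fix i assume i: "i \<in> {..p} - {0, p}"
      then have "p dvd (p choose i)" using dvd_choose_prime[of i p] assms p0 by auto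
      then obtain m where "p choose i = p * m" by blast
      then have "of_nat (p choose i) = (0::'a)" using assms by simp
      then show "of_nat (p choose i) * x ^ i * y ^ (p - i) = 0" by simp
    qed
  qed auto
  also have "\<dots> = x ^ p + y ^ p" using p0 by simp
  finally show ?thesis .
qed

lemma frob_pow:
  fixes x y :: "'a::comm_ring_1"
  assumes "prime p" "of_nat p = (0::'a)"
  shows "(x + y) ^ (p ^ n) = x ^ (p ^ n) + y ^ (p ^ n)"
proof (induction n)
  case 0 then show ?case by simp
next
  case (Suc n)
  have "(x + y) ^ (p ^ Suc n) = ((x + y) ^ (p ^ n)) ^ p"
    by (simp add: power_mult[symmetric] mult.commute)
  also have "\<dots> = (x ^ (p ^ n)) ^ p + (y ^ (p ^ n)) ^ p" using Suc frob_p[OF assms] by simp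
  also have "\<dots> = x ^ (p ^ Suc n) + y ^ (p ^ Suc n)"
    by (simp add: power_mult[symmetric] mult.commute)
  finally show ?case .
qed

lemma subfield_sum:
  assumes "is_subfield K" "finite A" "\<forall>i\<in>A. f i \<in> K"
  shows "sum f A \<in> K"
  using assms(2,3)
proof (induction A rule: finite_induct)
  case empty then show ?case using assms(1) by (simp add: is_subfield_def)
next
  case (insert x F) then show ?case using assms(1) by (simp add: is_subfield_def)
qed

lemma subfield_prod:
  assumes "is_subfield K" "finite A" "\<forall>i\<in>A. f i \<in> K"
  shows "prod f A \<in> K"
  using assms(2,3)
proof (induction A rule: finite_induct)
  case empty then show ?case using assms(1) by (simp add: is_subfield_def)
next
  case (insert x F) then show ?case using assms(1) by (simp add: is_subfield_def)
qed

lemma subfield_power: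
  assumes "is_subfield K" "x \<in> K"
  shows "x ^ n \<in> K"
  using subfield_prod[OF assms(1), of "{..<n}" "\<lambda>_. x"] assms(2) by simp

lemma subfield_ops:
  assumes "is_subfield K"
  shows "0 \<in> K" "1 \<in> K" "x \<in> K \<Longrightarrow> y \<in> K \<Longrightarrow> x + y \<in> K"
    "x \<in> K \<Longrightarrow> y \<in> K \<Longrightarrow> x * y \<in> K" "x \<in> K \<Longrightarrow> - x \<in> K"
    "x \<in> K \<Longrightarrow> y \<in> K \<Longrightarrow> x - y \<in> K"
    "x \<in> K \<Longrightarrow> inverse x \<in> K"
    "x \<in> K \<Longrightarrow> y \<in> K \<Longrightarrow> x / y \<in> K"
proof -
  have z: "0 \<in> K" and o: "1 \<in> K" and ad: "\<And>x y. x \<in> K \<Longrightarrow> y \<in> K \<Longrightarrow> x + y \<in> K"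
    and mu: "\<And>x y. x \<in> K \<Longrightarrow> y \<in> K \<Longrightarrow> x * y \<in> K"
    and ne: "\<And>x. x \<in> K \<Longrightarrow> - x \<in> K"
    and iv: "\<And>x. x \<in> K \<Longrightarrow> x \<noteq> 0 \<Longrightarrow> inverse x \<in> K"
    using assms unfolding is_subfield_def by blast+
  show "0 \<in> K" "1 \<in> K" by (fact z, fact o)
  show "x \<in> K \<Longrightarrow> y \<in> K \<Longrightarrow> x + y \<in> K" "x \<in> K \<Longrightarrow> y \<in> K \<Longrightarrow> x * y \<in> K"
     "x \<in> K \<Longrightarrow> - x \<in> K" by (fact ad, fact mu, fact ne)
  show "x \<in> K \<Longrightarrow> y \<in> K \<Longrightarrow> x - y \<in> K" using ad ne by (metis diff_conv_add_uminus)
  have inv: "x \<in> K \<Longrightarrow> inverse x \<in> K" for x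
    using iv z by (cases "x = 0") simp_all
  show "x \<in> K \<Longrightarrow> inverse x \<in> K" by (rule inv)
  show "x \<in> K \<Longrightarrow> y \<in> K \<Longrightarrow> x / y \<in> K" using mu inv[of y] by (simp add: divide_inverse)
qed

lemma poly_over_ops:
  assumes "is_subfield K"
  shows "poly_over K 0" "poly_over K 1"
    "poly_over K p \<Longrightarrow> poly_over K q \<Longrightarrow> poly_over K (p + q)"
    "poly_over K p \<Longrightarrow> poly_over K q \<Longrightarrow> poly_over K (p - q)"
    "poly_over K p \<Longrightarrow> poly_over K (- p)"
    "poly_over K p \<Longrightarrow> poly_over K q \<Longrightarrow> poly_over K (p * q)"
    "a \<in> K \<Longrightarrow> poly_over K p \<Longrightarrow> poly_over K (smult a p)"
    "a \<in> K \<Longrightarrow> poly_over K (monom a n)"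
    "a \<in> K \<Longrightarrow> poly_over K [:a:]"
  using subfield_ops[OF assms]
  apply (auto simp: poly_over_def coeff_monom coeff_pCons split: nat.splits)[8]
  subgoal premises prems
    unfolding poly_over_def coeff_mult
    using prems by (intro allI subfield_sum[OF assms]) auto
  subgoal using subfield_ops[OF assms] by (auto simp: poly_over_def coeff_pCons split: nat.splits)
  done

lemma poly_over_power:
  assumes "is_subfield K" "poly_over K p" shows "poly_over K (p ^ n)"
  by (induction n) (auto intro: poly_over_ops[OF assms(1)] assms(2))

lemma lin_descent:
  fixes M :: "'b \<Rightarrow> nat \<Rightarrow> 'a::field"
  assumes K: "is_subfield K" and M: "\<forall>i j. M i j \<in> K"
    and v: "\<exists>j<N. v j \<noteq> 0" "\<forall>i\<in>I. (\<Sum>j<N. M i j * v j) = 0"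
  shows "\<exists>w. (\<forall>j. w j \<in> K) \<and> (\<exists>j<N. w j \<noteq> 0) \<and> (\<forall>i\<in>I. (\<Sum>j<N. M i j * w j) = 0)"
  using M v
proof (induction N arbitrary: M v)
  case 0 then show ?case by simp
next
  case (Suc N)
  show ?case
  proof (cases "\<exists>i0\<in>I. M i0 N \<noteq> 0")
    case True
    then obtain i0 where i0: "i0 \<in> I" "M i0 N \<noteq> 0" by blast
    define M' where "M' i j = M i j - M i N * M i0 j / M i0 N" for i j
    have M'K: "\<forall>i j. M' i j \<in> K" unfolding M'_def using Suc.prems(1)
      by (auto intro!: subfield_ops[OF K])
    have eq: "(\<Sum>j<N. M i j * v j) = - (M i N * v N)" if "i \<in> I" for i
      using Suc.prems(3) that by (simp add: eq_neg_iff_add_eq_0)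
    have vN: "\<exists>j<N. v j \<noteq> 0"
    proof (rule ccontr)
      assume "\<not> ?thesis"
      then have "(\<Sum>j<N. M i0 j * v j) = 0" by simp
      with eq[OF i0(1)] i0(2) have "v N = 0" by simp
      with \<open>\<not> ?thesis\<close> Suc.prems(2) show False using less_Suc_eq by auto
    qed
    have v': "\<forall>i\<in>I. (\<Sum>j<N. M' i j * v j) = 0"
    proof
      fix i assume i: "i \<in> I"
      have "(\<Sum>j<N. M' i j * v j) = (\<Sum>j<N. M i j * v j) - M i N / M i0 N * (\<Sum>j<N. M i0 j * v j)"
        unfolding M'_def by (simp add: sum_subtractf sum_distrib_left algebra_simps)
      also have "\<dots> = 0" using eq[OF i] eq[OF i0(1)] i0(2) by (simp add: field_simps)
      finally show "(\<Sum>j<N. M' i j * v j) = 0" .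
    qed
    obtain w' where w': "\<forall>j. w' j \<in> K" "\<exists>j<N. w' j \<noteq> 0" "\<forall>i\<in>I. (\<Sum>j<N. M' i j * w' j) = 0"
      using Suc.IH[OF M'K vN v'] by blast
    define S0 where "S0 = (\<Sum>j<N. M i0 j * w' j)"
    define w where "w = w'(N := - S0 / M i0 N)"
    have S0K: "S0 \<in> K" unfolding S0_def using Suc.prems(1) w'(1)
      by (intro subfield_sum[OF K]) (auto intro: subfield_ops[OF K])
    have wK: "\<forall>j. w j \<in> K" unfolding w_def using w'(1) S0K Suc.prems(1)
      by (auto intro!: subfield_ops[OF K])
    have wnz: "\<exists>j<Suc N. w j \<noteq> 0" using w'(2) unfolding w_def by force
    have weq: "\<forall>i\<in>I. (\<Sum>j<Suc N. M i j * w j) = 0"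
    proof
      fix i assume i: "i \<in> I"
      have s1: "(\<Sum>j<N. M i j * w j) = (\<Sum>j<N. M i j * w' j)"
        unfolding w_def by (intro sum.cong) auto
      have "(\<Sum>j<N. M' i j * w' j) = (\<Sum>j<N. M i j * w' j) - M i N / M i0 N * S0"
        unfolding M'_def S0_def by (simp add: sum_subtractf sum_distrib_left algebra_simps)
      with w'(3) i have s2: "(\<Sum>j<N. M i j * w' j) = M i N / M i0 N * S0" by simp
      show "(\<Sum>j<Suc N. M i j * w j) = 0"
        using s1 s2 i0(2) by (simp add: w_def field_simps)
    qed
    show ?thesis using wK wnz weq by blast
  next
    case False
    define w where "w = (\<lambda>j. if j = N then 1 else (0::'a))"
    have "\<forall>i\<in>I. (\<Sum>j<Suc N. M i j * w j) = 0"
      using False by (simp add: w_def)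
    moreover have "\<forall>j. w j \<in> K" unfolding w_def using subfield_ops[OF K] by simp
    moreover have "\<exists>j<Suc N. w j \<noteq> 0" unfolding w_def by auto
    ultimately show ?thesis by blast
  qed
qed

lemma alg_root:
  fixes f :: "'a::field poly"
  assumes "alg_closed TYPE('a)" "degree f > 0"
  shows "\<exists>x. poly f x = 0"
  using assms unfolding alg_closed_def by blast

lemma sqf_dvd:
  fixes f g :: "'a::field poly"
  assumes ac: "alg_closed TYPE('a)" and "f \<noteq> 0"
    and "\<forall>y. poly f y = 0 \<longrightarrow> poly (pderiv f) y \<noteq> 0"
    and "\<forall>y. poly f y = 0 \<longrightarrow> poly g y = 0"
  shows "f dvd g"
  using assms(2-)
proof (induction "degree f" arbitrary: f g rule: less_induct)
  case less
  show ?case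
  proof (cases "degree f = 0")
    case True
    then obtain c where "f = [:c:]" by (metis degree_eq_zeroE)
    with less.prems(1) have "is_unit f" by (simp add: is_unit_const_poly_iff dvd_field_iff)
    then show ?thesis by (rule unit_imp_dvd)
  next
    case False
    then obtain r where r: "poly f r = 0" using alg_root[OF ac, of f] by auto
    then obtain f1 where f1: "f = [:-r, 1:] * f1" using poly_eq_0_iff_dvd by blast
    from r less.prems(3) have "poly g r = 0" by blast
    then obtain g1 where g1: "g = [:-r, 1:] * g1" using poly_eq_0_iff_dvd by blast
    have f1nz: "f1 \<noteq> 0" using less.prems(1) f1 by auto
    have deg: "degree f1 < degree f" using f1 f1nz by (metis degree_mult_eq degree_linear_power power_one_right pCons_eq_0_iff one_neq_zero less_add_one add.commute)
    have pd: "pderiv f = [:-r, 1:] * pderiv f1 + f1"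
    proof -
      have "pderiv ([:-r, 1:] * f1) = [:-r, 1:] * pderiv f1 + f1 * pderiv [:-r, 1:]"
        by (rule pderiv_mult)
      moreover have "pderiv [:-r, 1:] = 1" by (simp add: pderiv_pCons)
      ultimately show ?thesis using f1 by simp
    qed
    have "f1 dvd g1"
    proof (rule less.hyps[OF deg f1nz])
      show "\<forall>y. poly f1 y = 0 \<longrightarrow> poly (pderiv f1) y \<noteq> 0"
      proof (intro allI impI)
        fix y assume y: "poly f1 y = 0"
        then have "poly f y = 0" using f1 by simp
        then have "poly (pderiv f) y \<noteq> 0" using less.prems(2) by blast
        then show "poly (pderiv f1) y \<noteq> 0" using y pd by simp
      qed
      show "\<forall>y. poly f1 y = 0 \<longrightarrow> poly g1 y = 0"
      proof (intro allI impI)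
        fix y assume y: "poly f1 y = 0"
        have "y \<noteq> r"
        proof
          assume "y = r"
          then have "poly (pderiv f) r = 0" using y pd by simp
          with r less.prems(2) show False by blast
        qed
        have "poly f y = 0" using f1 y by simp
        then have "poly g y = 0" using less.prems(3) by blast
        then show "poly g1 y = 0" using g1 \<open>y \<noteq> r\<close> by simp
      qed
    qed
    then show ?thesis unfolding f1 g1 by (rule mult_dvd_mono[OF dvd_refl])
  qed
qed

lemma sum_lessThan_add:
  fixes n m :: nat shows "(\<Sum>j<n + m. g j) = (\<Sum>j<n. g j) + (\<Sum>i<m. g (n + i))"
  by (induction m) (simp_all add: add.assoc)

definition cmp :: "'a::field poly \<Rightarrow> (nat \<Rightarrow> 'a) \<Rightarrow> nat \<Rightarrow> 'a poly" where
  "cmp h u k = (\<Sum>j\<le>k. smult (u j) (h ^ j))"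

lemma poly_cmp: "poly (cmp h u k) y = (\<Sum>j\<le>k. u j * poly h y ^ j)"
  unfolding cmp_def by (simp add: poly_sum)

lemma system_identity:
  fixes f h :: "'a::field poly" and k D e :: nat and u :: "nat \<Rightarrow> 'a"
  shows "(\<Sum>j<Suc k + Suc D. (if j \<le> k then coeff (h ^ j) e else - coeff (monom 1 (j - Suc k) * f) e) * u j)
     = coeff (cmp h u k - (\<Sum>i\<le>D. monom (u (Suc k + i)) i) * f) e"
proof -
  define M where "M = (\<lambda>e j. if j \<le> k then coeff (h ^ j) e else - coeff (monom 1 (j - Suc k) * f) e)"
  have "(\<Sum>j<Suc k + Suc D. M e j * u j) = (\<Sum>j<Suc k. M e j * u j) + (\<Sum>i<Suc D. M e (Suc k + i) * u (Suc k + i))"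
    by (rule sum_lessThan_add)
  also have "(\<Sum>j<Suc k. M e j * u j) = (\<Sum>j\<le>k. coeff (h ^ j) e * u j)"
    unfolding M_def lessThan_Suc_atMost by (intro sum.cong) auto
  also have "\<dots> = coeff (cmp h u k) e"
    unfolding cmp_def coeff_sum by (simp add: mult.commute)
  also have "(\<Sum>i<Suc D. M e (Suc k + i) * u (Suc k + i)) = - (\<Sum>i\<le>D. u (Suc k + i) * coeff (monom 1 i * f) e)"
    unfolding M_def lessThan_Suc_atMost by (simp add: sum_negf[symmetric] mult.commute)
  also have "(\<Sum>i\<le>D. u (Suc k + i) * coeff (monom 1 i * f) e) = coeff ((\<Sum>i\<le>D. monom (u (Suc k + i)) i) * f) e"
    unfolding sum_distrib_right coeff_sum by (intro sum.cong) (auto simp: coeff_monom_mult)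
  finally show ?thesis unfolding M_def by simp
qed

lemma closure_poly:
  fixes x :: "'a::field" and h :: "'a poly"
  assumes ac: "alg_closed TYPE('a)" and K: "is_subfield K"
    and x: "x \<in> sep_closure K" and h: "poly_over K h"
  shows "poly h x \<in> sep_closure K"
proof -
  obtain f where f: "f \<noteq> 0" "poly_over K f" "poly f x = 0"
    "\<forall>y. poly f y = 0 \<longrightarrow> poly (pderiv f) y \<noteq> 0"
    using x unfolding sep_closure_def by blast
  define R where "R = {y. poly f y = 0}"
  have Rfin: "finite R" unfolding R_def using f(1) by (rule poly_roots_finite)
  define V where "V = poly h ` R"
  have Vfin: "finite V" unfolding V_def using Rfin by simp
  have xV: "poly h x \<in> V" unfolding V_def R_def using f(3) by simp
  define k where "k = card V"
  have k1: "k \<ge> 1" unfolding k_def using Vfin xV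
    by (metis One_nat_def Suc_leI card_gt_0_iff empty_iff)
  define Q where "Q = (\<Prod>v\<in>V. [:-v, 1:])"
  have degQ: "degree Q = k" unfolding Q_def k_def
    by (subst degree_prod_eq_sum_degree) auto
  have lcQ: "coeff Q k = 1" using degQ lead_coeff_prod[of "\<lambda>v. [:-v, 1:]" V]
    unfolding Q_def by simp
  have polyQ: "poly Q z = 0" if "z \<in> V" for z
    unfolding Q_def poly_prod using Vfin that by (intro prod_zero) auto
  define CQ where "CQ = cmp h (coeff Q) k"
  have "f dvd CQ"
  proof (rule sqf_dvd[OF ac f(1) f(4)], intro allI impI)
    fix y assume "poly f y = 0"
    then have "poly h y \<in> V" unfolding V_def R_def by simp
    then have "poly Q (poly h y) = 0" by (rule polyQ)
    then show "poly CQ y = 0" unfolding CQ_def poly_cmp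
      by (simp add: poly_altdef degQ mult.commute)
  qed
  then obtain G where G: "CQ = f * G" by blast
  define D where "D = degree G"
  define N where "N = Suc k + Suc D"
  define M where "M = (\<lambda>e j. if j \<le> k then coeff (h ^ j) e else - coeff (monom 1 (j - Suc k) * f) e)"
  have ident: "(\<Sum>j<N. M e j * u j) = coeff (cmp h u k - (\<Sum>i\<le>D. monom (u (Suc k + i)) i) * f) e" for e u
    unfolding M_def N_def by (rule system_identity)
  have MK: "\<forall>e j. M e j \<in> K"
  proof (intro allI)
    fix e j
    have "poly_over K (h ^ j)" by (rule poly_over_power[OF K h])
    moreover have "poly_over K (monom 1 (j - Suc k) * f)"
      by (intro poly_over_ops[OF K] f(2) subfield_ops[OF K])
    ultimately show "M e j \<in> K" unfolding M_def poly_over_def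
      by (auto intro: subfield_ops[OF K])
  qed
  define v0 where "v0 = (\<lambda>j. if j \<le> k then coeff Q j else coeff G (j - Suc k))"
  have v0nz: "\<exists>j<N. v0 j \<noteq> 0" unfolding N_def v0_def using lcQ by (intro exI[of _ k]) auto
  have v0sol: "\<forall>e\<in>UNIV. (\<Sum>j<N. M e j * v0 j) = 0"
  proof
    fix e :: nat
    have c1: "cmp h v0 k = CQ" unfolding CQ_def cmp_def v0_def by (intro sum.cong) auto
    have c2: "(\<Sum>i\<le>D. monom (v0 (Suc k + i)) i) = G"
      unfolding v0_def D_def by (simp add: poly_as_sum_of_monoms)
    show "(\<Sum>j<N. M e j * v0 j) = 0" unfolding ident c1 c2 G by (simp add: mult.commute)
  qed
  obtain w where w: "\<forall>j. w j \<in> K" "\<exists>j<N. w j \<noteq> 0" "\<forall>e\<in>UNIV. (\<Sum>j<N. M e j * w j) = 0"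
    using lin_descent[OF K MK v0nz v0sol] by blast
  define P where "P = (\<Sum>j\<le>k. monom (w j) j)"
  define G' where "G' = (\<Sum>i\<le>D. monom (w (Suc k + i)) i)"
  have eqn: "cmp h w k = G' * f"
  proof (rule poly_eqI)
    fix e show "coeff (cmp h w k) e = coeff (G' * f) e"
      using w(3) ident[of e w] unfolding G'_def by simp
  qed
  have coeffP: "coeff P j = (if j \<le> k then w j else 0)" for j
    unfolding P_def coeff_sum coeff_monom by (cases "j \<le> k") auto
  have PK: "poly_over K P" unfolding poly_over_def coeffP using w(1) subfield_ops[OF K] by simp
  have degP: "degree P \<le> k" unfolding P_def
    by (intro degree_sum_le) (auto intro: order.trans[OF degree_monom_le])
  have polyP: "poly P (poly h y) = poly (cmp h w k) y" for y
    unfolding P_def poly_cmp poly_sum poly_monom by simp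
  have Pnz: "P \<noteq> 0"
  proof
    assume P0: "P = 0"
    then have wk: "w j = 0" if "j \<le> k" for j using coeffP[of j] that by simp
    have "cmp h w k = 0" unfolding cmp_def using wk by simp
    with eqn f(1) have "G' = 0" by simp
    then have wD: "w (Suc k + i) = 0" if "i \<le> D" for i
      using arg_cong[OF \<open>G' = 0\<close>, of "\<lambda>p. coeff p i"] that unfolding G'_def coeff_sum coeff_monom
      by simp
    have "w j = 0" if "j < N" for j
    proof (cases "j \<le> k")
      case True then show ?thesis by (rule wk)
    next
      case False
      then have "j = Suc k + (j - Suc k)" "j - Suc k \<le> D" using that unfolding N_def by auto
      then show ?thesis using wD by metis
    qed
    with w(2) show False by blast
  qed
  have PV: "poly P v = 0" if vV: "v \<in> V" for v
  proof -
    obtain y where "poly f y = 0" "v = poly h y" using vV unfolding V_def R_def by blast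
    then show ?thesis using polyP eqn by simp
  qed
  have sep: "poly (pderiv P) z \<noteq> 0" if z: "poly P z = 0" for z
  proof
    assume dz: "poly (pderiv P) z = 0"
    obtain P1 where P1: "P = [:-z, 1:] * P1" using z poly_eq_0_iff_dvd by blast
    have P1nz: "P1 \<noteq> 0" using Pnz P1 by auto
    have "degree ([:-z, 1:] * P1) = degree [:-z,1:] + degree P1"
      by (rule degree_mult_eq) (use P1nz in auto)
    then have degP1: "degree P = Suc (degree P1)" using P1 by simp
    have "pderiv P = [:-z, 1:] * pderiv P1 + P1 * pderiv [:-z, 1:]"
      unfolding P1 by (rule pderiv_mult)
    moreover have "pderiv [:-z, 1:] = 1" by (simp add: pderiv_pCons)
    ultimately have "poly P1 z = 0" using dz by simp
    moreover have "poly P1 v = 0" if "v \<in> V" "v \<noteq> z" for v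
      using PV[OF that(1)] that(2) P1 by simp
    ultimately have sub: "insert z V \<subseteq> {y. poly P1 y = 0}" by blast
    have "k \<le> card (insert z V)" unfolding k_def using Vfin by (intro card_mono) auto
    also have "\<dots> \<le> card {y. poly P1 y = 0}" using sub poly_roots_finite[OF P1nz] by (rule card_mono[rotated])
    also have "\<dots> \<le> degree P1" by (rule card_poly_roots_bound[OF P1nz])
    finally show False using degP degP1 by simp
  qed
  show ?thesis unfolding sep_closure_def
    using Pnz PK PV[OF xV] sep by blast
qed

lemma K_sub_sep:
  assumes K: "is_subfield K" and a: "a \<in> K"
  shows "a \<in> sep_closure K"
proof -
  have "[:-a, 1:] \<noteq> 0" by simp
  moreover have "poly_over K [:-a, 1:]" unfolding poly_over_def
    using a subfield_ops[OF K] by (auto simp: coeff_pCons split: nat.splits)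
  moreover have "poly [:-a, 1:] a = 0" by simp
  moreover have "\<forall>y. poly (pderiv [:-a, 1:]) y \<noteq> 0" by (simp add: pderiv_pCons)
  ultimately show ?thesis unfolding sep_closure_def by blast
qed

lemma galois_facts:
  assumes "\<sigma> \<in> abs_galois K"
  shows "bij_betw \<sigma> (sep_closure K) (sep_closure K)"
    "\<And>x y. x \<in> sep_closure K \<Longrightarrow> y \<in> sep_closure K \<Longrightarrow> \<sigma> (x + y) = \<sigma> x + \<sigma> y"
    "\<And>x y. x \<in> sep_closure K \<Longrightarrow> y \<in> sep_closure K \<Longrightarrow> \<sigma> (x * y) = \<sigma> x * \<sigma> y"
    "\<And>x. x \<in> K \<Longrightarrow> \<sigma> x = x"
  using assms unfolding abs_galois_def by blast+

lemma galois_in: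
  assumes "\<sigma> \<in> abs_galois K" "x \<in> sep_closure K"
  shows "\<sigma> x \<in> sep_closure K"
  using galois_facts(1)[OF assms(1)] assms(2) bij_betwE by blast

lemma poly_over_pCons:
  "poly_over K (pCons a p) \<longleftrightarrow> a \<in> K \<and> poly_over K p"
  unfolding poly_over_def
proof
  assume "\<forall>i. coeff (pCons a p) i \<in> K"
  then show "a \<in> K \<and> (\<forall>i. coeff p i \<in> K)" by (metis coeff_pCons_0 coeff_pCons_Suc)
qed (auto simp: coeff_pCons split: nat.splits)

lemma galois_hom:
  assumes ac: "alg_closed TYPE('a::field)" and K: "is_subfield (K :: 'a set)"
    and sg: "\<sigma> \<in> abs_galois K" and x: "x \<in> sep_closure K"
    and h: "poly_over K h"
  shows "\<sigma> (poly h x) = poly h (\<sigma> x)"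
  using h
proof (induction h rule: pCons_induct)
  case 0
  then show ?case using galois_facts(4)[OF sg] subfield_ops(1)[OF K] by simp
next
  case (pCons a h1)
  have a: "a \<in> K" and h1: "poly_over K h1" using pCons.prems by (simp_all add: poly_over_pCons)
  have u: "poly h1 x \<in> sep_closure K" by (rule closure_poly[OF ac K x h1])
  have "poly_over K (pCons 0 h1)" using h1 subfield_ops(1)[OF K] by (simp add: poly_over_pCons)
  from closure_poly[OF ac K x this] have xu: "x * poly h1 x \<in> sep_closure K" by simp
  have aS: "a \<in> sep_closure K" by (rule K_sub_sep[OF K a])
  have "\<sigma> (poly (pCons a h1) x) = \<sigma> (a + x * poly h1 x)" by simp
  also have "\<dots> = \<sigma> a + \<sigma> (x * poly h1 x)" by (rule galois_facts(2)[OF sg aS xu])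
  also have "\<dots> = a + \<sigma> x * \<sigma> (poly h1 x)"
    using galois_facts(3)[OF sg x u] galois_facts(4)[OF sg a] by simp
  also have "\<dots> = poly (pCons a h1) (\<sigma> x)" using pCons.IH[OF h1] by simp
  finally show ?case .
qed

lemma sum_frob:
  fixes g :: "'b \<Rightarrow> 'a::comm_ring_1"
  assumes "\<And>x y. (x + y) ^ q = x ^ q + (y::'a) ^ q" "q > 0" "finite A"
  shows "(\<Sum>i\<in>A. g i) ^ q = (\<Sum>i\<in>A. g i ^ q)"
  using assms(3) by (induction A rule: finite_induct) (simp_all add: assms(1,2) zero_power)

locale fqctx =
  fixes Fq :: "'a::field set" and p q :: nat
  assumes pr: "prime p" and qp: "\<exists>n. q = p ^ n"
    and Fq: "is_subfield Fq" and Fqfin: "finite Fq" and Fqcard: "card Fq = q"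
begin

lemma q_ge2: "q \<ge> 2"
proof -
  have "{0, 1} \<subseteq> Fq" using subfield_ops[OF Fq] by auto
  then have "card {0::'a, 1} \<le> card Fq" using Fqfin by (rule card_mono[rotated])
  then show ?thesis using Fqcard by simp
qed

lemma q_pos: "q > 0" using q_ge2 by simp

lemma char_q: "of_nat q = (0::'a)"
proof -
  have inj: "inj_on (\<lambda>x. x + 1) Fq" by (auto simp: inj_on_def)
  have sub: "(\<lambda>x. x + 1) ` Fq \<subseteq> Fq" using subfield_ops[OF Fq] by auto
  have "(\<lambda>x. x + 1) ` Fq = Fq" by (rule endo_inj_surj[OF Fqfin sub inj])
  then have "(\<Sum>x\<in>Fq. x) = (\<Sum>x\<in>(\<lambda>x. x + 1) ` Fq. x)" by simp
  also have "\<dots> = (\<Sum>x\<in>Fq. x + 1)" by (rule sum.reindex[OF inj, unfolded comp_def])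
  also have "\<dots> = (\<Sum>x\<in>Fq. x) + of_nat (card Fq)" by (simp add: sum.distrib)
  finally show ?thesis using Fqcard by simp
qed

lemma char_p: "of_nat p = (0::'a)"
proof -
  obtain n where n: "q = p ^ n" using qp by blast
  have "(of_nat p :: 'a) ^ n = 0" using char_q n by simp
  then show ?thesis by simp
qed

lemma frob: "(x + y) ^ q = x ^ q + (y::'a) ^ q"
proof -
  obtain n where n: "q = p ^ n" using qp by blast
  show ?thesis unfolding n by (rule frob_pow[OF pr char_p])
qed

lemma frob_sum: "finite A \<Longrightarrow> (\<Sum>i\<in>A. g i) ^ q = (\<Sum>i\<in>A. (g i :: 'a) ^ q)"
  by (rule sum_frob[OF frob q_pos])

lemma frob_neg: "(- x :: 'a) ^ q = - (x ^ q)"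
proof -
  have "(x + - x) ^ q = x ^ q + (- x) ^ q" by (rule frob)
  then show ?thesis using q_pos by (simp add: zero_power eq_neg_iff_add_eq_0 add.commute)
qed

lemma frob_diff: "(x - y :: 'a) ^ q = x ^ q - y ^ q"
  using frob[of x "- y"] frob_neg[of y] by simp

lemma Fq_pow: assumes a: "a \<in> Fq" shows "a ^ q = a"
proof (cases "a = 0")
  case True then show ?thesis using q_pos by simp
next
  case False
  let ?F = "Fq - {0}"
  have fin: "finite ?F" using Fqfin by simp
  have inj: "inj_on (\<lambda>x. a * x) ?F" using False by (auto simp: inj_on_def)
  have sub: "(\<lambda>x. a * x) ` ?F \<subseteq> ?F" using subfield_ops[OF Fq] a False by auto
  have img: "(\<lambda>x. a * x) ` ?F = ?F" by (rule endo_inj_surj[OF fin sub inj])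
  have "prod (\<lambda>x. x) ?F = prod (\<lambda>x. x) ((\<lambda>x. a * x) ` ?F)" using img by simp
  also have "\<dots> = prod (\<lambda>x. a * x) ?F" by (rule prod.reindex[OF inj, unfolded comp_def])
  also have "\<dots> = a ^ card ?F * prod (\<lambda>x. x) ?F" by (simp add: prod.distrib)
  finally have e: "prod (\<lambda>x. x) ?F = a ^ card ?F * prod (\<lambda>x. x) ?F" .
  have "prod (\<lambda>x. x) ?F \<noteq> 0" using fin by simp
  with e have "a ^ card ?F = 1" by simp
  moreover have "card ?F = q - 1" using Fqcard subfield_ops(1)[OF Fq] Fqfin by simp
  ultimately have "a ^ (q - 1) = 1" by simp
  then have "a * a ^ (q - 1) = a" by simp
  then show ?thesis using q_pos by (metis power_eq_if neq0_conv)
qed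

lemma unit_root_in_Fq:
  assumes z: "z ^ (q - 1) = (1::'a)"
  shows "z \<in> Fq"
proof -
  define Z where "Z = monom (1::'a) (q - 1) - 1"
  have q1: "q - 1 \<noteq> 0" using q_ge2 by simp
  have "coeff Z (q - 1) = 1" unfolding Z_def using q1 by simp
  then have Znz: "Z \<noteq> 0" by auto
  have degZ: "degree Z \<le> q - 1" unfolding Z_def
    by (intro order.trans[OF degree_diff_le]) (auto intro: degree_monom_le)
  have polyZ: "poly Z y = y ^ (q - 1) - 1" for y unfolding Z_def by (simp add: poly_monom)
  have sub: "Fq - {0} \<subseteq> {y. poly Z y = 0}" using Fq_pow polyZ
  proof (intro subsetI)
    fix y assume y: "y \<in> Fq - {0}"
    then have "y ^ q = y" using Fq_pow by blast
    then have "y * y ^ (q - 1) = y * 1" using q_pos by (metis power_eq_if neq0_conv mult_1_right)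
    then have "y ^ (q - 1) = 1" using y by simp
    then show "y \<in> {y. poly Z y = 0}" using polyZ by simp
  qed
  have c1: "card (Fq - {0}) = q - 1" using Fqcard subfield_ops(1)[OF Fq] Fqfin by simp
  have "card {y. poly Z y = 0} \<le> q - 1" using card_poly_roots_bound[OF Znz] degZ by simp
  then have "Fq - {0} = {y. poly Z y = 0}"
    using card_subset_eq[OF poly_roots_finite[OF Znz] sub] c1
      card_mono[OF poly_roots_finite[OF Znz] sub] by simp
  moreover have "z \<in> {y. poly Z y = 0}" using polyZ z by simp
  ultimately show ?thesis by blast
qed

end

lemma tcoeff_2: "tcoeff [a, 1] i = (if i = 0 then a else if i = 1 then 1 else 0)"
  unfolding tcoeff_def by (cases i) (auto simp: nth_Cons split: nat.splits)

lemma tmul_coeff: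
  "(\<Sum>i\<le>k. tcoeff [a, 1] i * tcoeff b (k - i) ^ (q ^ i))
     = a * tcoeff b k + (if 1 \<le> k then tcoeff b (k - 1) ^ q else 0)"
proof -
  have "(\<Sum>i\<le>k. tcoeff [a, 1] i * tcoeff b (k - i) ^ (q ^ i))
      = (\<Sum>i\<le>k. (if i = 0 then a * tcoeff b k else 0) + (if i = 1 then tcoeff b (k - 1) ^ q else 0))"
    by (intro sum.cong) (auto simp: tcoeff_2)
  also have "\<dots> = a * tcoeff b k + (if 1 \<le> k then tcoeff b (k - 1) ^ q else 0)"
    by (simp add: sum.distrib)
  finally show ?thesis .
qed

lemma teval_alt: "teval q b x = (\<Sum>k<length b. tcoeff b k * x ^ (q ^ k))"
  unfolding teval_def tcoeff_def by simp

context fqctx begin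

lemma teval_step:
  fixes x a :: 'a and b :: "'a list"
  shows "teval q (tmul q [a, 1] b) x = a * teval q b x + (teval q b x) ^ q"
proof -
  let ?n = "length b"
  let ?t = "tcoeff b"
  have len: "length (tmul q [a, 1] b) = Suc ?n" unfolding tmul_def by simp
  have nth: "tmul q [a, 1] b ! k = a * ?t k + (if 1 \<le> k then ?t (k - 1) ^ q else 0)" if "k < Suc ?n" for k
    using that unfolding tmul_def by (simp add: tmul_coeff del: upt_Suc)
  have "teval q (tmul q [a, 1] b) x = (\<Sum>k<Suc ?n. (a * ?t k + (if 1 \<le> k then ?t (k - 1) ^ q else 0)) * x ^ (q ^ k))"
    unfolding teval_def len by (intro sum.cong) (simp_all add: nth)
  also have "\<dots> = a * (\<Sum>k<Suc ?n. ?t k * x ^ (q ^ k)) + (\<Sum>k<Suc ?n. (if 1 \<le> k then ?t (k - 1) ^ q else 0) * x ^ (q ^ k))"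
    by (simp add: algebra_simps sum.distrib sum_distrib_left)
  also have "(\<Sum>k<Suc ?n. ?t k * x ^ (q ^ k)) = teval q b x"
    unfolding teval_alt by (simp add: tcoeff_def)
  also have "(\<Sum>k<Suc ?n. (if 1 \<le> k then ?t (k - 1) ^ q else 0) * x ^ (q ^ k)) = (\<Sum>k<?n. ?t k ^ q * x ^ (q ^ Suc k))"
    by (subst sum.lessThan_Suc_shift) simp
  also have "\<dots> = (\<Sum>k<?n. (?t k * x ^ (q ^ k)) ^ q)"
    by (intro sum.cong) (simp_all add: power_mult_distrib power_mult[symmetric] mult.commute)
  also have "\<dots> = (teval q b x) ^ q" unfolding teval_alt using frob_sum[of "{..<length b}" "\<lambda>k. tcoeff b k * x ^ (q ^ k)"] by simp
  finally show ?thesis .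
qed

lemma E_Suc: fixes c :: "nat \<Rightarrow> 'a" shows "teval q (fpoly q c (Suc s)) x = c (Suc s) * teval q (fpoly q c s) x + (teval q (fpoly q c s) x) ^ q"
  by (simp add: teval_step)

lemma E_0: fixes x :: 'a shows "teval q (fpoly q c 0) x = x"
  by (simp add: teval_def)

end

fun Ppol :: "nat \<Rightarrow> (nat \<Rightarrow> 'a::field) \<Rightarrow> nat \<Rightarrow> 'a poly" where
  "Ppol q c 0 = [:0, 1:]"
| "Ppol q c (Suc s) = Ppol q c s ^ q + smult (c (Suc s)) (Ppol q c s)"

locale mctx = fqctx Fq p q for Fq :: "'a::field set" and p q +
  fixes K :: "'a set" and r :: nat and c :: "nat \<Rightarrow> 'a"
  assumes ac: "alg_closed TYPE('a)" and K: "is_subfield K" and FK: "Fq \<subseteq> K"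
    and cK: "\<forall>i\<in>{1..r}. c i \<in> K \<and> c i \<noteq> 0"
begin

abbreviation E :: "nat \<Rightarrow> 'a \<Rightarrow> 'a" where "E s x \<equiv> teval q (fpoly q c s) x"

lemma teval_one: "teval q [1] x = x" by (simp add: teval_def)

lemmas Es = teval_step teval_one

lemma cK': "i \<in> {1..r} \<Longrightarrow> c i \<in> K" "i \<in> {1..r} \<Longrightarrow> c i \<noteq> 0"
  using cK by auto

lemma poly_P: "poly (Ppol q c s) x = E s x"
  by (induction s) (simp_all add: Es add.commute)

lemma P_over: "s \<le> r \<Longrightarrow> poly_over K (Ppol q c s)"
proof (induction s)
  case 0 then show ?case
    using subfield_ops[OF K] by (simp add: poly_over_pCons poly_over_ops[OF K])
next
  case (Suc s)
  then have "Suc s \<in> {1..r}" by simp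
  then show ?case using Suc
    by (simp add: poly_over_ops[OF K] poly_over_power[OF K] cK')
qed

lemma P_deriv: "s \<le> r \<Longrightarrow> poly (pderiv (Ppol q c s)) y \<noteq> 0"
proof (induction s)
  case 0 then show ?case by (simp add: pderiv_pCons)
next
  case (Suc s)
  have q: "q = Suc (q - 1)" using q_pos by simp
  have "pderiv (Ppol q c s ^ Suc (q - 1)) = smult (of_nat (Suc (q - 1))) (Ppol q c s ^ (q - 1)) * pderiv (Ppol q c s)"
    by (rule pderiv_power_Suc)
  then have "pderiv (Ppol q c s ^ q) = 0" using q char_q by simp
  then have "pderiv (Ppol q c (Suc s)) = smult (c (Suc s)) (pderiv (Ppol q c s))"
    by (simp add: pderiv_add pderiv_smult)
  moreover have "c (Suc s) \<noteq> 0" using Suc.prems cK' by simp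
  ultimately show ?case using Suc by simp
qed

lemma P_deg: "degree (Ppol q c s) = q ^ s"
proof (induction s)
  case 0 then show ?case by simp
next
  case (Suc s)
  have pos: "degree (Ppol q c s) > 0" using Suc q_pos by simp
  then have nz: "Ppol q c s \<noteq> 0" by auto
  have d1: "degree (Ppol q c s ^ q) = q * degree (Ppol q c s)" by (rule degree_power_eq[OF nz])
  have "degree (smult (c (Suc s)) (Ppol q c s)) \<le> degree (Ppol q c s)" by (rule degree_smult_le)
  also have "\<dots> < q * degree (Ppol q c s)" using pos q_ge2 by simp
  finally have "degree (Ppol q c (Suc s)) = q * degree (Ppol q c s)"
    using d1 by (simp add: degree_add_eq_left)
  then show ?case using Suc by simp
qed

lemma P_nz: "Ppol q c s \<noteq> 0"
  using P_deg[of s] q_pos by (metis degree_0 power_not_zero neq0_conv)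

lemma E_in_sep: "s \<le> r \<Longrightarrow> E s x = 0 \<Longrightarrow> x \<in> sep_closure K"
  unfolding sep_closure_def mem_Collect_eq
  by (rule exI[of _ "Ppol q c s"]) (simp add: P_nz P_over P_deriv poly_P)

lemma E_add: "E s (x + y) = E s x + E s y"
  by (induction s) (simp_all add: Es frob distrib_left)

lemma E_smult: "a \<in> Fq \<Longrightarrow> E s (a * x) = a * E s x"
  by (induction s) (simp_all add: Es Fq_pow power_mult_distrib distrib_left mult.left_commute)

lemma E_zero: "E s 0 = 0"
  using E_smult[of 0 s 0] subfield_ops(1)[OF Fq] by simp

lemma E_diff: "E s (x - y) = E s x - E s y"
  using E_add[of s "x - y" y] by (simp add: algebra_simps)

lemma E_mono: "E s x = 0 \<Longrightarrow> s \<le> t \<Longrightarrow> E t x = 0"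
proof (induction t)
  case 0 then show ?case by simp
next
  case (Suc t)
  then show ?case
  proof (cases "s = Suc t")
    case False then have "E t x = 0" using Suc by simp
    then show ?thesis using q_pos by (simp add: Es zero_power)
  qed simp
qed

lemma E_sum: "finite A \<Longrightarrow> \<forall>i\<in>A. a i \<in> Fq \<Longrightarrow> E s (\<Sum>i\<in>A. a i * w i) = (\<Sum>i\<in>A. a i * E s (w i))"
  by (induction A rule: finite_induct) (simp_all add: E_zero E_add E_smult)

lemma kernel:
  assumes "c0 * \<nu> + \<nu> ^ q = 0" "\<mu> ^ (q - 1) = - c0" "c0 \<noteq> 0"
  shows "\<exists>a\<in>Fq. \<nu> = a * \<mu>"
proof (cases "\<nu> = 0")
  case True then show ?thesis using subfield_ops(1)[OF Fq] by auto
next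
  case False
  have q: "q = Suc (q - 1)" using q_pos by simp
  have mu: "\<mu> \<noteq> 0"
  proof
    assume "\<mu> = 0"
    then have "\<mu> ^ (q - 1) = 0" using q_ge2 by (simp add: zero_power)
    with assms(2,3) show False by simp
  qed
  have "\<nu> * (c0 + \<nu> ^ (q - 1)) = 0" using assms(1) by (subst (asm) q) (simp add: algebra_simps)
  then have nu: "\<nu> ^ (q - 1) = - c0" using False by (simp add: eq_neg_iff_add_eq_0 add.commute)
  have "(\<nu> / \<mu>) ^ (q - 1) = 1" using nu assms(2,3) by (simp add: power_divide)
  then have "\<nu> / \<mu> \<in> Fq" by (rule unit_root_in_Fq)
  moreover have "\<nu> = (\<nu> / \<mu>) * \<mu>" using mu by simp
  ultimately show ?thesis by blast
qed

end

context mctx begin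

definition mu :: "nat \<Rightarrow> 'a" where "mu j = (SOME m. m ^ (q - 1) = - c j)"
definition ww :: "nat \<Rightarrow> 'a" where "ww j = (SOME x. E (j - 1) x = mu j)"

lemma mu_prop: "mu j ^ (q - 1) = - c j"
proof -
  define Z where "Z = monom (1::'a) (q - 1) + [:c j:]"
  have "degree (monom (1::'a) (q - 1)) = q - 1" by (simp add: degree_monom_eq)
  moreover have "q - 1 > 0" using q_ge2 by simp
  ultimately have "degree Z = q - 1" unfolding Z_def by (simp add: degree_add_eq_left)
  with \<open>q - 1 > 0\<close> obtain y where "poly Z y = 0" using alg_root[OF ac, of Z] by auto
  then have "y ^ (q - 1) = - c j" unfolding Z_def by (simp add: poly_monom eq_neg_iff_add_eq_0)
  then show ?thesis unfolding mu_def by (rule someI)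
qed

lemma mu_nz: "j \<in> {1..r} \<Longrightarrow> mu j \<noteq> 0"
proof
  assume j: "j \<in> {1..r}" and "mu j = 0"
  then have "mu j ^ (q - 1) = 0" using q_ge2 by (simp add: zero_power)
  with mu_prop[of j] cK'(2)[OF j] show False by simp
qed

lemma mu_q: "c j * mu j + mu j ^ q = 0"
proof -
  have q: "q = Suc (q - 1)" using q_pos by simp
  have "mu j ^ q = mu j * mu j ^ (q - 1)" by (subst q) simp
  then show ?thesis using mu_prop[of j] by (simp add: algebra_simps)
qed

lemma ww_prop: "E (j - 1) (ww j) = mu j"
proof -
  define Z where "Z = Ppol q c (j - 1) - [:mu j:]"
  have d: "degree (Ppol q c (j - 1)) > 0" using P_deg q_pos by simp
  then have "degree Z = degree (Ppol q c (j - 1))" unfolding Z_def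
    by (simp add: degree_add_eq_left diff_conv_add_uminus)
  with d obtain y where "poly Z y = 0" using alg_root[OF ac, of Z] by auto
  then have "E (j - 1) y = mu j" unfolding Z_def by (simp add: poly_P)
  then show ?thesis unfolding ww_def by (rule someI)
qed

lemma ww_E: "j \<ge> 1 \<Longrightarrow> E j (ww j) = 0"
proof -
  assume "j \<ge> 1"
  then have j: "j = Suc (j - 1)" by simp
  have "E (Suc (j - 1)) (ww j) = c (Suc (j - 1)) * E (j - 1) (ww j) + E (j - 1) (ww j) ^ q"
    by (simp add: Es)
  also have "\<dots> = 0" using mu_q[of j] ww_prop[of j] j by simp
  finally show ?thesis using j by simp
qed

lemma ww_below: "1 \<le> i \<Longrightarrow> i \<le> s \<Longrightarrow> E s (ww i) = 0"
  using E_mono[OF ww_E] by blast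

lemma ww_inj: "inj_on ww {1..r}"
proof (rule linorder_inj_onI)
  fix i j assume ij: "i < j" "i \<in> {1..r}" "j \<in> {1..r}"
  have "E (j - 1) (ww i) = 0" using ij by (intro ww_below) auto
  moreover have "E (j - 1) (ww j) \<noteq> 0" using ww_prop[of j] mu_nz[OF ij(3)] by simp
  ultimately show "ww i \<noteq> ww j" by auto
qed auto

lemma span_indep:
  "s \<le> r \<Longrightarrow> (\<forall>l. E s l = 0 \<longrightarrow> (\<exists>a. (\<forall>i. a i \<in> Fq) \<and> l = (\<Sum>i=1..s. a i * ww i)))
     \<and> (\<forall>a. (\<forall>i\<in>{1..s}. a i \<in> Fq) \<and> (\<Sum>i=1..s. a i * ww i) = 0 \<longrightarrow> (\<forall>i\<in>{1..s}. a i = 0))"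
proof (induction s)
  case 0
  show ?case
  proof (intro conjI allI impI)
    fix l assume "E 0 l = 0"
    then have "l = 0" by (simp add: teval_one)
    then show "\<exists>a. (\<forall>i. a i \<in> Fq) \<and> l = (\<Sum>i=1..0. a i * ww i)"
      using subfield_ops(1)[OF Fq] by (intro exI[of _ "\<lambda>_. 0"]) simp
  qed simp
next
  case (Suc s)
  then have IH: "\<forall>l. E s l = 0 \<longrightarrow> (\<exists>a. (\<forall>i. a i \<in> Fq) \<and> l = (\<Sum>i=1..s. a i * ww i))"
    "\<forall>a. (\<forall>i\<in>{1..s}. a i \<in> Fq) \<and> (\<Sum>i=1..s. a i * ww i) = 0 \<longrightarrow> (\<forall>i\<in>{1..s}. a i = 0)"
    by simp_all
  have js: "Suc s \<in> {1..r}" using Suc.prems by simp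
  have Ew: "E s (ww (Suc s)) = mu (Suc s)" using ww_prop[of "Suc s"] by simp
  show ?case
  proof (intro conjI allI impI)
    fix l assume l: "E (Suc s) l = 0"
    let ?nu = "E s l"
    have "c (Suc s) * ?nu + ?nu ^ q = 0" using l by (simp add: Es)
    then obtain b where b: "b \<in> Fq" "?nu = b * mu (Suc s)"
      using kernel[OF _ mu_prop cK'(2)[OF js]] by blast
    have "E s (l - b * ww (Suc s)) = 0"
      by (simp add: E_diff E_smult[OF b(1)] Ew b(2))
    then obtain a where a: "\<forall>i. a i \<in> Fq" "l - b * ww (Suc s) = (\<Sum>i=1..s. a i * ww i)"
      using IH(1) by blast
    define a' where "a' = a(Suc s := b)"
    have "(\<Sum>i=1..Suc s. a' i * ww i) = (\<Sum>i=1..s. a' i * ww i) + b * ww (Suc s)"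
      by (simp add: a'_def)
    also have "(\<Sum>i=1..s. a' i * ww i) = (\<Sum>i=1..s. a i * ww i)"
      unfolding a'_def by (intro sum.cong) auto
    finally have "l = (\<Sum>i=1..Suc s. a' i * ww i)" using a(2) by (simp add: algebra_simps)
    moreover have "\<forall>i. a' i \<in> Fq" using a(1) b(1) by (simp add: a'_def)
    ultimately show "\<exists>a. (\<forall>i. a i \<in> Fq) \<and> l = (\<Sum>i=1..Suc s. a i * ww i)" by blast
  next
    fix a assume a: "(\<forall>i\<in>{1..Suc s}. a i \<in> Fq) \<and> (\<Sum>i=1..Suc s. a i * ww i) = 0"
    have sp: "(\<Sum>i=1..Suc s. a i * ww i) = (\<Sum>i=1..s. a i * ww i) + a (Suc s) * ww (Suc s)"
      by simp
    have "E s (\<Sum>i=1..Suc s. a i * ww i) = (\<Sum>i=1..Suc s. a i * E s (ww i))"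
      using a by (intro E_sum) auto
    also have "\<dots> = (\<Sum>i=1..s. a i * E s (ww i)) + a (Suc s) * mu (Suc s)" using Ew by simp
    also have "(\<Sum>i=1..s. a i * E s (ww i)) = 0" by (intro sum.neutral) (simp add: ww_below)
    finally have "a (Suc s) * mu (Suc s) = 0" using a by (simp add: E_zero)
    then have as: "a (Suc s) = 0" using mu_nz[OF js] by simp
    then have "(\<Sum>i=1..s. a i * ww i) = 0" using a sp by simp
    then have "\<forall>i\<in>{1..s}. a i = 0" using IH(2) a by auto
    then show "\<forall>i\<in>{1..Suc s}. a i = 0" using as by (auto simp: le_Suc_eq)
  qed
qed

end

context mctx begin

abbreviation W where "W s \<equiv> Wsp q K c s"

lemma W_eq: "s \<le> r \<Longrightarrow> W s = {l. E s l = 0}"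
  unfolding Wsp_def using E_in_sep by blast

lemma W0: "W 0 = {0}"
  unfolding Wsp_def using K_sub_sep[OF K subfield_ops(1)[OF K]] by (auto simp: teval_one)

lemma ww_in_W: "s \<le> r \<Longrightarrow> i \<in> {1..s} \<Longrightarrow> ww i \<in> W s"
  using W_eq ww_below by auto

lemma W_strict: "s \<in> {1..r} \<Longrightarrow> W (s - 1) \<subset> W s"
proof -
  assume s: "s \<in> {1..r}"
  have "W (s - 1) \<subseteq> W s" using s W_eq[of s] W_eq[of "s - 1"] E_mono[of "s - 1" _ s] by auto
  moreover have "ww s \<in> W s" using s by (intro ww_in_W) auto
  moreover have "ww s \<notin> W (s - 1)" using s W_eq[of "s - 1"] ww_prop[of s] mu_nz[OF s] by auto
  ultimately show ?thesis by blast
qed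

lemma W_subspace: "s \<le> r \<Longrightarrow> is_subspace Fq (W s)"
  unfolding is_subspace_def using W_eq[of s] by (simp add: E_zero E_add E_smult)

lemma W_galois:
  assumes s: "s \<le> r" and sg: "\<sigma> \<in> abs_galois K"
  shows "\<sigma> ` W s \<subseteq> W s"
proof
  fix y assume "y \<in> \<sigma> ` W s"
  then obtain l where l: "l \<in> W s" "y = \<sigma> l" by blast
  have lS: "l \<in> sep_closure K" and El: "E s l = 0" using l(1) unfolding Wsp_def by auto
  have "E s (\<sigma> l) = \<sigma> (E s l)"
    using galois_hom[OF ac K sg lS P_over[OF s]] by (simp add: poly_P)
  also have "\<dots> = 0" using El galois_facts(4)[OF sg subfield_ops(1)[OF K]] by simp
  finally show "y \<in> W s" using l(2) galois_in[OF sg lS] unfolding Wsp_def by simp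
qed

lemma sum_img: "s \<le> r \<Longrightarrow> (\<Sum>b\<in>ww ` {1..s}. g b) = (\<Sum>i=1..s. g (ww i))"
  by (rule sum.reindex_cong[OF inj_on_subset[OF ww_inj]]) auto

lemma W_basis:
  assumes s: "s \<le> r"
  shows "is_basis Fq (W s) (ww ` {1..s})"
  unfolding is_basis_def
proof (intro conjI)
  show "finite (ww ` {1..s})" by simp
  show "ww ` {1..s} \<subseteq> W s" using ww_in_W[OF s] by auto
  have SI: "\<forall>l. E s l = 0 \<longrightarrow> (\<exists>a. (\<forall>i. a i \<in> Fq) \<and> l = (\<Sum>i=1..s. a i * ww i))"
    "\<forall>a. (\<forall>i\<in>{1..s}. a i \<in> Fq) \<and> (\<Sum>i=1..s. a i * ww i) = 0 \<longrightarrow> (\<forall>i\<in>{1..s}. a i = 0)"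
    using span_indep[OF s] by simp_all
  show "lin_indep Fq (ww ` {1..s})" unfolding lin_indep_def
  proof (intro allI impI)
    fix a assume a: "(\<forall>b\<in>ww ` {1..s}. a b \<in> Fq) \<and> (\<Sum>b\<in>ww ` {1..s}. a b * b) = 0"
    then have "(\<forall>i\<in>{1..s}. a (ww i) \<in> Fq) \<and> (\<Sum>i=1..s. a (ww i) * ww i) = 0"
      using sum_img[OF s, of "\<lambda>b. a b * b"] by simp
    then have "\<forall>i\<in>{1..s}. a (ww i) = 0" using spec[OF SI(2), of "\<lambda>i. a (ww i)"] by blast
    then show "\<forall>b\<in>ww ` {1..s}. a b = 0" by blast
  qed
  show "W s = lin_comb Fq (ww ` {1..s})"
  proof
    show "W s \<subseteq> lin_comb Fq (ww ` {1..s})"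
    proof
      fix l assume "l \<in> W s"
      then have "E s l = 0" using W_eq[OF s] by simp
      then obtain a where a: "\<forall>i. a i \<in> Fq" "l = (\<Sum>i=1..s. a i * ww i)" using SI(1) by blast
      define a' where "a' b = a (the_inv_into {1..s} ww b)" for b
      have inj: "inj_on ww {1..s}" using inj_on_subset[OF ww_inj] s by auto
      have "(\<Sum>b\<in>ww ` {1..s}. a' b * b) = (\<Sum>i=1..s. a' (ww i) * ww i)" by (rule sum_img[OF s])
      also have "\<dots> = (\<Sum>i=1..s. a i * ww i)"
      proof (rule sum.cong[OF refl])
        fix i assume "i \<in> {1..s}"
        then have inv: "the_inv_into {1..s} ww (ww i) = i" by (rule the_inv_into_f_f[OF inj])
        show "a' (ww i) * ww i = a i * ww i" unfolding a'_def inv ..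
      qed
      finally have "l = (\<Sum>b\<in>ww ` {1..s}. a' b * b)" using a(2) by simp
      moreover have "\<forall>b\<in>ww ` {1..s}. a' b \<in> Fq" using a(1) unfolding a'_def by simp
      ultimately show "l \<in> lin_comb Fq (ww ` {1..s})" unfolding lin_comb_def by blast
    qed
    show "lin_comb Fq (ww ` {1..s}) \<subseteq> W s"
    proof
      fix l assume "l \<in> lin_comb Fq (ww ` {1..s})"
      then obtain a where a: "\<forall>b\<in>ww ` {1..s}. a b \<in> Fq" "l = (\<Sum>b\<in>ww ` {1..s}. a b * b)"
        unfolding lin_comb_def by blast
      have "E s l = (\<Sum>b\<in>ww ` {1..s}. a b * E s b)" unfolding a(2) using a(1) by (intro E_sum) auto
      also have "\<dots> = 0" using ww_in_W[OF s] W_eq[OF s] by (intro sum.neutral) auto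
      finally show "l \<in> W s" using W_eq[OF s] by simp
    qed
  qed
qed

lemma W_dim: "s \<le> r \<Longrightarrow> has_dim Fq (W s) s"
  unfolding has_dim_def using W_basis inj_on_subset[OF ww_inj]
  by (intro exI[of _ "ww ` {1..s}"]) (auto simp: card_image)

lemma triangular:
  assumes sg: "\<sigma> \<in> abs_galois K" and j: "j \<in> {1..r}"
  shows "\<exists>a. (\<forall>i. a i \<in> Fq) \<and> \<sigma> (ww j) = (\<Sum>i=1..j. a i * ww i) \<and> a j = kummer q K (- c j) \<sigma>"
proof -
  let ?m = "mu j"
  have jr: "j \<le> r" and j1: "j - 1 \<le> r" using j by auto
  have wS: "ww j \<in> sep_closure K" using E_in_sep[OF jr ww_E] j by auto
  have mE: "?m = poly (Ppol q c (j - 1)) (ww j)" using ww_prop[of j] by (simp add: poly_P)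
  have mS: "?m \<in> sep_closure K" unfolding mE by (rule closure_poly[OF ac K wS P_over[OF j1]])
  have mnz: "?m \<noteq> 0" by (rule mu_nz[OF j])
  have cj: "c j \<in> K" "c j \<noteq> 0" using cK' j by auto
  define l where "l = (SOME l. l \<in> sep_closure K \<and> l ^ (q - 1) = - c j)"
  have "\<exists>l. l \<in> sep_closure K \<and> l ^ (q - 1) = - c j" using mS mu_prop by blast
  then have l0: "l \<in> sep_closure K \<and> l ^ (q - 1) = - c j" unfolding l_def by (rule someI_ex)
  then have l: "l \<in> sep_closure K" "l ^ (q - 1) = - c j" by simp_all
  have kum: "kummer q K (- c j) \<sigma> = \<sigma> l / l" unfolding kummer_def l_def Let_def by simp
  have q: "q = Suc (q - 1)" using q_pos by simp
  have "l ^ q = l * l ^ (q - 1)" by (subst q) simp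
  then have "c j * l + l ^ q = 0" using l(2) by (simp add: algebra_simps)
  then obtain z where z: "z \<in> Fq" "l = z * ?m" using kernel[OF _ mu_prop cj(2)] by blast
  have lnz: "l \<noteq> 0"
  proof
    assume "l = 0"
    then have "l ^ (q - 1) = 0" using q_ge2 by (simp add: zero_power)
    with l(2) cj(2) show False by simp
  qed
  then have znz: "z \<noteq> 0" using z by auto
  have zK: "z \<in> K" using z(1) FK by blast
  have "\<sigma> l = \<sigma> z * \<sigma> ?m" using galois_facts(3)[OF sg K_sub_sep[OF K zK] mS] z(2) by simp
  then have sl: "\<sigma> l = z * \<sigma> ?m" using galois_facts(4)[OF sg zK] by simp
  define \<kappa> where "\<kappa> = \<sigma> l / l"
  have kap: "\<kappa> = \<sigma> ?m / ?m" unfolding \<kappa>_def sl using znz by (simp add: z(2))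
  have "poly_over K (monom 1 (q - 1))" by (rule poly_over_ops(8)[OF K subfield_ops(2)[OF K]])
  from galois_hom[OF ac K sg mS this]
  have "\<sigma> (?m ^ (q - 1)) = \<sigma> ?m ^ (q - 1)" by (simp add: poly_monom)
  then have "\<sigma> ?m ^ (q - 1) = - c j"
    using mu_prop[of j] galois_facts(4)[OF sg subfield_ops(5)[OF K cj(1)]] by simp
  then have "\<kappa> ^ (q - 1) = 1" unfolding kap using mu_prop[of j] cj(2) by (simp add: power_divide)
  then have kF: "\<kappa> \<in> Fq" by (rule unit_root_in_Fq)
  have "E (j - 1) (\<sigma> (ww j)) = \<sigma> (E (j - 1) (ww j))"
    using galois_hom[OF ac K sg wS P_over[OF j1]] by (simp add: poly_P)
  also have "\<dots> = \<sigma> ?m" using ww_prop[of j] by simp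
  finally have Es1: "E (j - 1) (\<sigma> (ww j)) = \<sigma> ?m" .
  have "E (j - 1) (\<sigma> (ww j) - \<kappa> * ww j) = \<sigma> ?m - \<kappa> * ?m"
    using Es1 ww_prop[of j] by (simp add: E_diff E_smult[OF kF])
  also have "\<dots> = 0" unfolding kap using mnz by simp
  finally have "E (j - 1) (\<sigma> (ww j) - \<kappa> * ww j) = 0" .
  from mp[OF spec[OF conjunct1[OF span_indep[OF j1]]] this]
  obtain a where a: "\<forall>i. a i \<in> Fq" "\<sigma> (ww j) - \<kappa> * ww j = (\<Sum>i=1..j - 1. a i * ww i)"
    by blast
  define a' where "a' = a(j := \<kappa>)"
  obtain j' where jj: "j = Suc j'" using j by (cases j) auto
  have "(\<Sum>i=1..j. a' i * ww i) = (\<Sum>i=1..j'. a' i * ww i) + a' j * ww j"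
    unfolding jj by simp
  also have "(\<Sum>i=1..j'. a' i * ww i) = (\<Sum>i=1..j - 1. a i * ww i)"
    unfolding a'_def jj by (intro sum.cong) auto
  also have "a' j = \<kappa>" by (simp add: a'_def)
  finally have A: "(\<Sum>i=1..j. a' i * ww i) = (\<Sum>i=1..j - 1. a i * ww i) + \<kappa> * ww j" .
  have "\<sigma> (ww j) = (\<Sum>i=1..j. a' i * ww i)" unfolding A a(2)[symmetric] by simp
  moreover have "\<forall>i. a' i \<in> Fq" using a(1) kF by (simp add: a'_def)
  moreover have "a' j = kummer q K (- c j) \<sigma>" using kum by (simp add: a'_def \<kappa>_def)
  ultimately show ?thesis by blast
qed

end

theorem lemma5p13:
  fixes Fq K :: "'a::field set" and t :: 'a and p q r :: nat and c :: "nat \<Rightarrow> 'a"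
  assumes "alg_closed TYPE('a)"
    and "prime p" and "\<exists>n. q = p ^ n"
    and "is_subfield Fq" and "finite Fq" and "card Fq = q"
    and "t \<in> K" and "transcendental_over Fq t"
    and "is_subfield K" and "Fq \<subseteq> K" and "rat_fun_field Fq t \<subseteq> K"
    and "finite_ext (rat_fun_field Fq t) K"
    and "\<forall>i\<in>{1..r}. c i \<in> K \<and> c i \<noteq> 0"
  shows "Wsp q K c 0 = {0}
    \<and> (\<forall>s\<in>{1..r}. Wsp q K c (s - 1) \<subset> Wsp q K c s)
    \<and> (\<forall>s\<le>r. is_subspace Fq (Wsp q K c s)
              \<and> (\<forall>\<sigma>\<in>abs_galois K. \<sigma> ` Wsp q K c s \<subseteq> Wsp q K c s)
              \<and> has_dim Fq (Wsp q K c s) s)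
    \<and> (\<exists>w :: nat \<Rightarrow> 'a. inj_on w {1..r} \<and> is_basis Fq (Wsp q K c r) (w ` {1..r})
         \<and> (\<forall>\<sigma>\<in>abs_galois K. \<forall>j\<in>{1..r}. \<exists>a :: nat \<Rightarrow> 'a. (\<forall>i. a i \<in> Fq)
               \<and> \<sigma> (w j) = (\<Sum>i=1..j. a i * w i)
               \<and> a j = kummer q K (- c j) \<sigma>))"
proof -
  interpret mctx Fq p q K r c
    by unfold_locales (use assms in auto)
  show ?thesis
  proof (intro conjI)
    show "W 0 = {0}" by (rule W0)
    show "\<forall>s\<in>{1..r}. W (s - 1) \<subset> W s" using W_strict by blast
    show "\<forall>s\<le>r. is_subspace Fq (W s) \<and> (\<forall>\<sigma>\<in>abs_galois K. \<sigma> ` W s \<subseteq> W s) \<and> has_dim Fq (W s) s"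
      using W_subspace W_galois W_dim by blast
    show "\<exists>w :: nat \<Rightarrow> 'a. inj_on w {1..r} \<and> is_basis Fq (W r) (w ` {1..r})
         \<and> (\<forall>\<sigma>\<in>abs_galois K. \<forall>j\<in>{1..r}. \<exists>a :: nat \<Rightarrow> 'a. (\<forall>i. a i \<in> Fq)
               \<and> \<sigma> (w j) = (\<Sum>i=1..j. a i * w i)
               \<and> a j = kummer q K (- c j) \<sigma>)"
    proof (rule exI[of _ ww], intro conjI ballI)
      show "inj_on ww {1..r}" by (rule ww_inj)
      show "is_basis Fq (W r) (ww ` {1..r})" by (rule W_basis) simp
      show "\<exists>a. (\<forall>i. a i \<in> Fq) \<and> \<sigma> (ww j) = (\<Sum>i=1..j. a i * ww i) \<and> a j = kummer q K (- c j) \<sigma>"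
        if "\<sigma> \<in> abs_galois K" "j \<in> {1..r}" for \<sigma> j by (rule triangular[OF that])
    qed
  qed
qed


end
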